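(* Assume (A1)–(A2) and $N\geq \max\{1,\|f\|_\infty/2\}$, and let $v_n^h$ ($n\ge0$) be the functions produced by the semi-discrete policy iteration described in the context. Then for all $n\geq 0$, $v_{n+1}^h\leq v_n^h$ in $[0,T]\times\mathbb{R}^d$.
   Context: Let $d,m\ge1$, $T\ge 1$, $A\subset\mathbb{R}^m$ compact, $c:[0,T]\times\mathbb{R}^d\times A\to\mathbb{R}$, $f:[0,T]\times\mathbb{R}^d\times A\to\mathbb{R}^d$, $q:\mathbb{R}^d\to\mathbb{R}$. Let $\alpha(t,x,p)=\operatorname{argmin}_{a\in A}[c(t,x,a)+p\cdot f(t,x,a)]$, assumed to be the unique minimizer. Assumptions: (A1) $c,f,q$ are uniformly bounded and Lipschitz continuous in all their variables; (A2) $\alpha(\cdot,\cdot,\cdot)$ and a given continuous initial policy $\alpha_0:\mathbb{R}\times\mathbb{R}^d\to A$ are uniformly Lipschitz continuous in all their variables. For $\varphi:\mathbb{R}^d\to\mathbb{R}$, $h\in(0,1)$: $\nabla^h\varphi(x)=\big(\frac{\varphi(x+he_i)-\varphi(x-he_i)}{2h}\big)_{i=1}^d$, $\Delta^h\varphi(x)=\sum_{i=1}^d\frac{\varphi(x+he_i)-2\varphi(x)+\varphi(x-he_i)}{h^2}$ (acting in $x$). Semi-discrete policy iteration: for $n=0,1,\dots$, $v_n^h$ is the bounded Lipschitz solution of $\partial_t v_n^h+c(t,x,\alpha_n(t,x))+\nabla^h v_n^h\cdot f(t,x,\alpha_n(t,x))=-Nh\Delta^h v_n^h$ in $(0,T)\times\mathbb{R}^d$,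 $v_n^h(T,x)=q(x)$, and then $\alpha_{n+1}(t,x)=\alpha(t,x,\nabla^h v_n^h(t,x))$. *)

theory Defs
  imports "HOL-Analysis.Analysis"
begin

definition disc_grad :: "real \<Rightarrow> (real^'d \<Rightarrow> real) \<Rightarrow> real^'d \<Rightarrow> real^'d" where
  "disc_grad h \<phi> x = (\<chi> i. (\<phi> (x + h *\<^sub>R axis i 1) - \<phi> (x - h *\<^sub>R axis i 1)) / (2 * h))"

definition disc_lap :: "real \<Rightarrow> (real^'d \<Rightarrow> real) \<Rightarrow> real^'d \<Rightarrow> real" where
  "disc_lap h \<phi> x = (\<Sum>i\<in>UNIV. (\<phi> (x + h *\<^sub>R axis i 1) - 2 * \<phi> x + \<phi> (x - h *\<^sub>R axis i 1)) / h\<^sup>2)"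

end

theory Submission
  imports Defs
begin


lemma disc_lap_diff: "disc_lap h (\<lambda>y. u y - w y) x = disc_lap h u x - disc_lap h w x"
  unfolding disc_lap_def by (simp add: sum_subtractf[symmetric] diff_divide_distrib[symmetric] algebra_simps)

lemma disc_grad_diff: "disc_grad h (\<lambda>y. u y - w y) x = disc_grad h u x - disc_grad h w x"
  unfolding disc_grad_def by (simp add: vec_eq_iff diff_divide_distrib[symmetric] algebra_simps)

lemma op_bound:
  fixes w :: "real^'d \<Rightarrow> real" and b :: "real^'d"
  assumes N: "N \<ge> 0" and h: "h > 0" and b: "\<And>i. \<bar>b$i\<bar> \<le> 2*N"
    and p: "\<And>i. w (x + h *\<^sub>R axis i 1) - w x \<le> D"
    and m: "\<And>i. w (x - h *\<^sub>R axis i 1) - w x \<le> D"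
  shows "N*h*disc_lap h w x + disc_grad h w x \<bullet> b \<le> real CARD('d) * (2*N/h) * D"
proof -
  define P where "P i = w (x + h *\<^sub>R axis i 1) - w x" for i
  define M where "M i = w (x - h *\<^sub>R axis i 1) - w x" for i
  have eq: "N*h*disc_lap h w x + disc_grad h w x \<bullet> b =
     (\<Sum>i\<in>UNIV. (N/h + b$i/(2*h)) * P i + (N/h - b$i/(2*h)) * M i)"
    unfolding disc_lap_def disc_grad_def inner_vec_def P_def M_def
    using h by (simp add: sum_distrib_left sum.distrib[symmetric] power2_eq_square,
       intro sum.cong refl, simp add: field_simps)
  have "(N/h + b$i/(2*h)) * P i + (N/h - b$i/(2*h)) * M i \<le> (2*N/h) * D" for i
  proof -
    have c1: "N/h + b$i/(2*h) \<ge> 0" and c2: "N/h - b$i/(2*h) \<ge> 0"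
      using b[of i] h by (auto simp: field_simps abs_le_iff)
    have "(N/h + b$i/(2*h)) * P i \<le> (N/h + b$i/(2*h)) * D"
      using c1 p[of i] P_def by (simp add: mult_left_mono)
    moreover have "(N/h - b$i/(2*h)) * M i \<le> (N/h - b$i/(2*h)) * D"
      using c2 m[of i] M_def by (simp add: mult_left_mono)
    ultimately show ?thesis by (simp add: field_simps)
  qed
  then have "(\<Sum>i\<in>UNIV. (N/h + b$i/(2*h)) * P i + (N/h - b$i/(2*h)) * M i) \<le> (\<Sum>i\<in>(UNIV::'d set). (2*N/h) * D)"
    by (rule sum_mono)
  then show ?thesis using eq by simp
qed


theorem proposition2p3:
  fixes T h N :: real
    and A :: "(real^'m) set"
    and c :: "real \<Rightarrow> real^'d \<Rightarrow> real^'m \<Rightarrow> real"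
    and f :: "real \<Rightarrow> real^'d \<Rightarrow> real^'m \<Rightarrow> real^'d"
    and q :: "real^'d \<Rightarrow> real"
    and \<alpha> :: "real \<Rightarrow> real^'d \<Rightarrow> real^'d \<Rightarrow> real^'m"
    and \<alpha>0 :: "real \<Rightarrow> real^'d \<Rightarrow> real^'m"
    and v :: "nat \<Rightarrow> real \<Rightarrow> real^'d \<Rightarrow> real"
    and pol :: "nat \<Rightarrow> real \<Rightarrow> real^'d \<Rightarrow> real^'m"
  assumes T: "T \<ge> 1"
    and h: "0 < h" "h < 1"
    and A: "compact A"
    \<comment> \<open>(A1)\<close>
    and c_bdd: "bounded ((\<lambda>(t, x, a). c t x a) ` ({0..T} \<times> UNIV \<times> A))"
    and c_lip: "\<exists>L. L-lipschitz_on ({0..T} \<times> UNIV \<times> A) (\<lambda>(t, x, a). c t x a)"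
    and f_bdd: "bounded ((\<lambda>(t, x, a). f t x a) ` ({0..T} \<times> UNIV \<times> A))"
    and f_lip: "\<exists>L. L-lipschitz_on ({0..T} \<times> UNIV \<times> A) (\<lambda>(t, x, a). f t x a)"
    and q_bdd: "bounded (range q)"
    and q_lip: "\<exists>L. L-lipschitz_on UNIV q"
    \<comment> \<open>alpha is the unique minimizer of c + p . f over A\<close>
    and alpha_min: "\<And>t x p. t \<in> {0..T} \<Longrightarrow> \<alpha> t x p \<in> A \<and>
        (\<forall>a\<in>A. a \<noteq> \<alpha> t x p \<longrightarrow>
           c t x (\<alpha> t x p) + p \<bullet> f t x (\<alpha> t x p) < c t x a + p \<bullet> f t x a)"
    \<comment> \<open>(A2)\<close>
    and alpha_lip: "\<exists>L. L-lipschitz_on ({0..T} \<times> UNIV \<times> UNIV) (\<lambda>(t, x, p). \<alpha> t x p)"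
    and alpha0_A: "\<And>t x. \<alpha>0 t x \<in> A"
    and alpha0_cont: "continuous_on UNIV (\<lambda>(t, x). \<alpha>0 t x)"
    and alpha0_lip: "\<exists>L. L-lipschitz_on UNIV (\<lambda>(t, x). \<alpha>0 t x)"
    \<comment> \<open>condition on N\<close>
    and N: "N \<ge> max 1 ((SUP (t, x, a) \<in> {0..T} \<times> UNIV \<times> A. norm (f t x a)) / 2)"
    \<comment> \<open>policy iteration\<close>
    and pol0: "pol 0 = \<alpha>0"
    and polSuc: "\<And>n t x. pol (Suc n) t x = \<alpha> t x (disc_grad h (v n t) x)"
    and v_bdd: "\<And>n. bounded ((\<lambda>(t, x). v n t x) ` ({0..T} \<times> UNIV))"
    and v_lip: "\<And>n. \<exists>L. L-lipschitz_on ({0..T} \<times> UNIV) (\<lambda>(t, x). v n t x)"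
    and v_eq: "\<And>n t x. t \<in> {0<..<T} \<Longrightarrow>
        ((\<lambda>s. v n s x) has_real_derivative
           (- N * h * disc_lap h (v n t) x - c t x (pol n t x)
            - disc_grad h (v n t) x \<bullet> f t x (pol n t x))) (at t)"
    and v_T: "\<And>n x. v n T x = q x"
  shows "\<forall>n. \<forall>t\<in>{0..T}. \<forall>x. v (Suc n) t x \<le> v n t x"
proof (intro allI)
  fix n
  define w where "w t x = v (Suc n) t x - v n t x" for t x
  define wd where "wd t x = (- N * h * disc_lap h (v (Suc n) t) x - c t x (pol (Suc n) t x)
      - disc_grad h (v (Suc n) t) x \<bullet> f t x (pol (Suc n) t x))
      - (- N * h * disc_lap h (v n t) x - c t x (pol n t x)
      - disc_grad h (v n t) x \<bullet> f t x (pol n t x))" for t x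
  have wder: "((\<lambda>s. w s x) has_real_derivative wd t x) (at t)" if "t \<in> {0<..<T}" for t x
    unfolding w_def wd_def by (intro DERIV_diff v_eq that)
  obtain L0 where L0: "L0-lipschitz_on ({0..T} \<times> UNIV) (\<lambda>(t, x). v (Suc n) t x)"
    using v_lip by blast
  obtain L1 where L1: "L1-lipschitz_on ({0..T} \<times> UNIV) (\<lambda>(t, x). v n t x)"
    using v_lip by blast
  define L where "L = \<bar>L0\<bar> + \<bar>L1\<bar> + 1"
  have Lpos: "L > 0" unfolding L_def by simp
  have wlip: "\<bar>w t x - w s x\<bar> \<le> L * \<bar>t - s\<bar>" if "t \<in> {0..T}" "s \<in> {0..T}" for t s x
  proof -
    have dd: "dist (t, x) (s, x) = \<bar>t - s\<bar>"
      by (simp add: dist_Pair_Pair dist_real_def)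
    have a: "dist (v (Suc n) t x) (v (Suc n) s x) \<le> L0 * \<bar>t - s\<bar>"
      using lipschitz_onD[OF L0, of "(t,x)" "(s,x)"] that dd by simp
    have b: "dist (v n t x) (v n s x) \<le> L1 * \<bar>t - s\<bar>"
      using lipschitz_onD[OF L1, of "(t,x)" "(s,x)"] that dd by simp
    have a': "L0 * \<bar>t - s\<bar> \<le> \<bar>L0\<bar> * \<bar>t - s\<bar>" by (simp add: mult_right_mono)
    have b': "L1 * \<bar>t - s\<bar> \<le> \<bar>L1\<bar> * \<bar>t - s\<bar>" by (simp add: mult_right_mono)
    have "\<bar>w t x - w s x\<bar> \<le> dist (v (Suc n) t x) (v (Suc n) s x) + dist (v n t x) (v n s x)"
      unfolding w_def dist_real_def by linarith
    also have "\<dots> \<le> (\<bar>L0\<bar> + \<bar>L1\<bar>) * \<bar>t - s\<bar>" using a b a' b' by (simp add: algebra_simps)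
    also have "\<dots> \<le> L * \<bar>t - s\<bar>" unfolding L_def by (simp add: mult_right_mono)
    finally show ?thesis .
  qed
  have polA: "pol m t x \<in> A" if "t \<in> {0..T}" for m t x
  proof (cases m)
    case 0 then show ?thesis using pol0 alpha0_A by simp
  next
    case (Suc k) then show ?thesis using polSuc alpha_min that by simp
  qed
  obtain B where B: "\<And>y. y \<in> (\<lambda>(t, x, a). f t x a) ` ({0..T} \<times> UNIV \<times> A) \<Longrightarrow> norm y \<le> B"
    using f_bdd unfolding bounded_iff by blast
  have bddF: "bdd_above ((\<lambda>(t, x, a). norm (f t x a)) ` ({0..T} \<times> UNIV \<times> A))"
    by (rule bdd_aboveI[where M=B]) (use B in force)
  have fbound: "\<bar>f t x a $ i\<bar> \<le> 2 * N" if "t \<in> {0..T}" "a \<in> A" for t x a i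
  proof -
    have "norm (f t x a) = (\<lambda>(t, x, a). norm (f t x a)) (t, x, a)" by simp
    also have "\<dots> \<le> (SUP (t, x, a) \<in> {0..T} \<times> UNIV \<times> A. norm (f t x a))"
      by (rule cSUP_upper[OF _ bddF]) (use that in auto)
    finally have "norm (f t x a) \<le> 2 * N" using N by linarith
    then show ?thesis using component_le_norm_cart[of "f t x a" i] by linarith
  qed
  have Nnn: "N \<ge> 0" using N by simp
  have wd_low: "wd t x \<ge> - (real CARD('d) * (2*N/h) * D)"
    if t: "t \<in> {0<..<T}" and p: "\<And>i. w t (x + h *\<^sub>R axis i 1) - w t x \<le> D"
      and m: "\<And>i. w t (x - h *\<^sub>R axis i 1) - w t x \<le> D" for t x D
  proof -
    have t': "t \<in> {0..T}" using t by auto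
    define b where "b = f t x (pol (Suc n) t x)"
    define g0 where "g0 = disc_grad h (v n t) x"
    have mn: "c t x (pol (Suc n) t x) + g0 \<bullet> b \<le> c t x (pol n t x) + g0 \<bullet> f t x (pol n t x)"
    proof -
      have e: "pol (Suc n) t x = \<alpha> t x g0" using polSuc g0_def by simp
      show ?thesis
      proof (cases "pol n t x = \<alpha> t x g0")
        case True then show ?thesis using e b_def by simp
      next
        case False
        then show ?thesis using alpha_min[OF t', of x g0] polA[OF t', of n x] e b_def
          by (metis less_eq_real_def)
      qed
    qed
    have wt: "w t = (\<lambda>y. v (Suc n) t y - v n t y)" by (simp add: w_def fun_eq_iff)
    have op: "N*h*disc_lap h (w t) x + disc_grad h (w t) x \<bullet> b \<le> real CARD('d) * (2*N/h) * D"
      by (rule op_bound[OF Nnn]) (use h p m fbound[OF t' polA[OF t']] b_def in auto)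
    have e1: "disc_grad h (v (Suc n) t) x \<bullet> b = disc_grad h (w t) x \<bullet> b + g0 \<bullet> b"
      unfolding wt disc_grad_diff g0_def by (simp add: inner_diff_left)
    have e2: "N*h*disc_lap h (w t) x = N*h*disc_lap h (v (Suc n) t) x - N*h*disc_lap h (v n t) x"
      unfolding wt disc_lap_diff by (simp add: algebra_simps)
    have "wd t x = - (N*h*disc_lap h (w t) x + disc_grad h (w t) x \<bullet> b)
        - (c t x (pol (Suc n) t x) + g0 \<bullet> b) + (c t x (pol n t x) + g0 \<bullet> f t x (pol n t x))"
      unfolding wd_def using e1 e2 b_def g0_def by simp
    then show ?thesis using op mn by linarith
  qed
  have claim: "w t x \<le> \<epsilon> * (T - t + 1)" if eps: "\<epsilon> > 0" and t: "t \<in> {0..T}" for \<epsilon> t x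
  proof -
    define \<psi> where "\<psi> r = \<epsilon> * (T - r + 1)" for r
    define C where "C = real CARD('d) * (2*N/h)"
    define \<eta> where "\<eta> = \<epsilon> / (4*C*L)"
    have Cpos: "C > 0" unfolding C_def using h N by simp
    have etapos: "\<eta> > 0" unfolding \<eta>_def using Cpos Lpos eps by simp
    have CL: "C * (2*L*\<eta>) = \<epsilon>/2" unfolding \<eta>_def using Cpos Lpos by (simp add: field_simps)
    have step: "w t x \<le> \<psi> t" if tau: "\<tau> \<in> {0..T}" and H: "\<forall>y. w \<tau> y \<le> \<psi> \<tau>"
      and t: "t \<in> {0..T}" "\<tau> - \<eta> \<le> t" "t \<le> \<tau>" for \<tau> t x
    proof (rule ccontr)
      assume neg: "\<not> w t x \<le> \<psi> t"
      have lt: "t < \<tau>" using neg H t(3) by (cases "t = \<tau>") auto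
      define g where "g r = w r x - \<psi> r" for r
      have gder: "(g has_real_derivative wd r x + \<epsilon>) (at r)" if "r \<in> {0<..<T}" for r
      proof -
        have "((\<lambda>r. w r x - \<psi> r) has_real_derivative wd r x - (- \<epsilon>)) (at r)"
          unfolding \<psi>_def by (intro DERIV_diff wder that) (auto intro!: derivative_eq_intros)
        then show ?thesis unfolding g_def[abs_def] by simp
      qed
      have wl: "L-lipschitz_on {0..T} (\<lambda>r. w r x)"
        by (rule lipschitz_onI) (use wlip Lpos in \<open>auto simp: dist_real_def\<close>)
      have cont: "continuous_on {t..\<tau>} g"
      proof -
        have "continuous_on {0..T} (\<lambda>r. w r x)" by (rule lipschitz_on_continuous_on[OF wl])
        then have "continuous_on {t..\<tau>} (\<lambda>r. w r x)"
          by (rule continuous_on_subset) (use t tau in auto)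
        then show ?thesis unfolding g_def[abs_def] \<psi>_def by (intro continuous_intros)
      qed
      have dif: "g differentiable (at r)" if "t < r" "r < \<tau>" for r
        using gder[of r] that t tau by (auto simp: real_differentiable_def)
      obtain l z where z: "t < z" "z < \<tau>" "(g has_real_derivative l) (at z)" "g \<tau> - g t = (\<tau> - t) * l"
        using MVT[OF lt cont dif] by blast
      have zin: "z \<in> {0<..<T}" using z t tau by auto
      have lz: "l = wd z x + \<epsilon>" using DERIV_unique[OF z(3) gder[OF zin]] .
      have "g \<tau> \<le> 0" using H g_def by simp
      moreover have "g t > 0" using neg g_def by simp
      ultimately have "(\<tau> - t) * l < 0" using z(4) by linarith
      then have lneg: "l < 0" using lt by (simp add: mult_less_0_iff)
      have zT: "z \<in> {0..T}" using zin by auto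
      have up: "w z y \<le> \<psi> \<tau> + L * \<eta>" for y
      proof -
        have "w z y \<le> w \<tau> y + L * \<bar>z - \<tau>\<bar>" using wlip[OF zT tau, of y] by linarith
        moreover have "L * \<bar>z - \<tau>\<bar> \<le> L * \<eta>" using z t Lpos by (intro mult_left_mono) auto
        ultimately show ?thesis using H by smt
      qed
      have lo: "w z x \<ge> \<psi> \<tau> - L * \<eta>"
      proof -
        have "w t x \<le> w z x + L * \<bar>t - z\<bar>" using wlip[OF t(1) zT, of x] by linarith
        moreover have "L * \<bar>t - z\<bar> \<le> L * \<eta>" using z t Lpos by (intro mult_left_mono) auto
        moreover have "\<psi> \<tau> \<le> \<psi> t" unfolding \<psi>_def using t eps by (intro mult_left_mono) auto
        ultimately show ?thesis using neg by linarith
      qed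
      have "wd z x \<ge> - (C * (2*L*\<eta>))"
        unfolding C_def
        proof (rule wd_low[OF zin])
        fix i
        show "w z (x + h *\<^sub>R axis i 1) - w z x \<le> 2 * L * \<eta>"
          using up[of "x + h *\<^sub>R axis i 1"] lo by linarith
        show "w z (x - h *\<^sub>R axis i 1) - w z x \<le> 2 * L * \<eta>"
          using up[of "x - h *\<^sub>R axis i 1"] lo by linarith
      qed
      then have "l \<ge> \<epsilon>/2" using lz CL by linarith
      then show False using lneg eps by linarith
    qed
    have ind: "\<forall>t\<in>{0..T}. T - real k * \<eta> \<le> t \<longrightarrow> (\<forall>x. w t x \<le> \<psi> t)" for k
    proof (induction k)
      case 0
      show ?case
      proof (intro ballI impI allI)
        fix t x assume "t \<in> {0..T}" "T - real 0 * \<eta> \<le> t"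
        then have "t = T" by auto
        then show "w t x \<le> \<psi> t" using v_T eps by (simp add: w_def \<psi>_def)
      qed
    next
      case (Suc k)
      show ?case
      proof (intro ballI impI allI)
        fix t x assume t: "t \<in> {0..T}" "T - real (Suc k) * \<eta> \<le> t"
        show "w t x \<le> \<psi> t"
        proof (cases "T - real k * \<eta> \<le> t")
          case True then show ?thesis using Suc.IH t by blast
        next
          case False
          define \<tau> where "\<tau> = T - real k * \<eta>"
          have tau: "\<tau> \<in> {0..T}" using False t etapos unfolding \<tau>_def by auto
          have H: "\<forall>y. w \<tau> y \<le> \<psi> \<tau>" using Suc.IH tau unfolding \<tau>_def by auto
          show ?thesis
            by (rule step[OF tau H t(1)]) (use t False in \<open>auto simp: \<tau>_def algebra_simps\<close>)
        qed
      qed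
    qed
    obtain k where k: "T / \<eta> \<le> real k" using real_arch_simple by blast
    have "T \<le> real k * \<eta>" using k etapos by (simp add: field_simps)
    then have "T - real k * \<eta> \<le> t" using t by auto
    then have "w t x \<le> \<psi> t" using ind[of k] t by blast
    then show ?thesis unfolding \<psi>_def .
  qed
  show "\<forall>t\<in>{0..T}. \<forall>x. v (Suc n) t x \<le> v n t x"
  proof (intro ballI allI)
    fix t x assume t: "t \<in> {0..T}"
    show "v (Suc n) t x \<le> v n t x"
    proof (rule ccontr)
      assume "\<not> ?thesis"
      then have wp: "w t x > 0" by (simp add: w_def)
      define \<epsilon> where "\<epsilon> = w t x / (2 * (T + 1))"
      have ep: "\<epsilon> > 0" using wp T unfolding \<epsilon>_def by simp
      have "w t x \<le> \<epsilon> * (T - t + 1)" by (rule claim[OF ep t])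
      also have "\<dots> \<le> \<epsilon> * (T + 1)" using t ep by (intro mult_left_mono) auto
      also have "\<dots> = w t x / 2" unfolding \<epsilon>_def using T by (simp add: field_simps)
      finally show False using wp by linarith
    qed
  qed
qed

end
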